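(* Consider the Cartesian stochastic variational inequality setting described in the context, with unique solution $x^*$ of VI$(X,F)$, and let $\{\delta_k\}$, $\{\Gamma_k\}$ be positive sequences with $\delta_k\le\min_{1\le i\le N}\gamma_{k,i}$ and $\Gamma_k\ge\max_{1\le i\le N}\gamma_{k,i}$ for all $k$. (a) Almost surely, for all $k\ge0$, $$\mathsf E[\|x_{k+1}-x^*\|^2\mid\mathcal F_k]\le(1-2(\eta+L)\delta_k+2L\Gamma_k+L^2\Gamma_k^2)\|x_k-x^*\|^2+\Gamma_k^2\nu^2.$$ (b) If moreover $\frac{\Gamma_k-\delta_k}{\delta_k}\le\beta$ for all $k\ge0$, where $0\le\beta<\frac{\eta}{L}$, then for all $k\ge0$, $$\mathsf E[\|x_{k+1}-x^*\|^2]\le(1-2(\eta-\beta L)\delta_k+(1+\beta)^2L^2\delta_k^2)\mathsf E[\|x_k-x^*\|^2]+(1+\beta)^2\delta_k^2\nu^2.$$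
   Context: Let $N\ge1$, $n_1,\dots,n_N\ge1$, $n=\sum_i n_i$, and $X=\prod_{i=1}^N X_i$ where each $X_i\subseteq\mathbb R^{n_i}$ is nonempty, closed and convex. For random vectors $\xi_i$ and functions $\Phi_i$, let $F_i(x)=\mathsf E[\Phi_i(x,\xi_i)]\in\mathbb R^{n_i}$ and $F=(F_1;\dots;F_N):X\to\mathbb R^n$. VI$(X,F)$ asks for $x^*\in X$ with $(x-x^* )^TF(x^* )\ge0$ for all $x\in X$. Assume $F$ is single-valued and Lipschitz continuous on $X$ with constant $L>0$, and strongly monotone on $X$ with constant $\eta>0$, i.e. $(F(x)-F(y))^T(x-y)\ge\eta\|x-y\|^2$ for all $x,y\in X$. $\Pi_{X_i}$ is the Euclidean projection onto $X_i$. The distributed scheme is: $x_0\in X$ random, independent of all other randomness, with $\mathsf E\|x_0\|^2<\infty$, and for $k\ge0$, $i=1,\dots,N$, $x_{k+1,i}=\Pi_{X_i}(x_{k,i}-\gamma_{k,i}(F_i(x_k)+w_{k,i}))$ with deterministic stepsizes $\gamma_{k,i}>0$ and $w_{k,i}=\Phi_i(x_k,\xi_{k,i})-F_i(x_k)$, where $x_k=(x_{k,1};\dots;x_{k,N})$. With $\mathcal F_k=\{x_0,\xi_0,\dots,\xi_{k-1}\}$, $\mathsf E[w_{k,i}\mid\mathcal F_k]=0$ for all $k,i$, and there is a deterministic $\nu>0$ with $\mathsf E[\|w_k\|^2\mid\mathcal F_k]\le\nu^2$ a.s. for all $k$, where $w_k=(w_{k,1};\dots;w_{k,N})$. *)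

theory Defs
  imports "HOL-Probability.Probability"
begin

text \<open>Coordinates of R^n are the finite type 'c; the block structure
  R^n = R^{n_1} x ... x R^{n_N} is given by blk :: 'c => 'i (coordinate c lies in block blk c).
  A block vector x_i is represented as the vector of real^'c that agrees with x on
  block i and is zero elsewhere.\<close>

definition blockproj :: "('c::finite \<Rightarrow> 'i) \<Rightarrow> 'i \<Rightarrow> real^'c \<Rightarrow> real^'c" where
  "blockproj blk i x = (\<chi> c. if blk c = i then x $ c else 0)"

definition block_space :: "('c::finite \<Rightarrow> 'i) \<Rightarrow> 'i \<Rightarrow> (real^'c) set" where
  "block_space blk i = {v. \<forall>c. blk c \<noteq> i \<longrightarrow> v $ c = 0}"

definition cart_prod :: "('c::finite \<Rightarrow> 'i) \<Rightarrow> ('i \<Rightarrow> (real^'c) set) \<Rightarrow> (real^'c) set" where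
  "cart_prod blk Xb = {x. \<forall>i. blockproj blk i x \<in> Xb i}"

definition VI_sol :: "(real^'c::finite) set \<Rightarrow> (real^'c \<Rightarrow> real^'c) \<Rightarrow> real^'c \<Rightarrow> bool" where
  "VI_sol X F xs \<longleftrightarrow> xs \<in> X \<and> (\<forall>x\<in>X. (x - xs) \<bullet> F xs \<ge> 0)"

definition gen_filt :: "'a measure \<Rightarrow> ('a \<Rightarrow> real^'c::finite) \<Rightarrow> 's measure
    \<Rightarrow> (nat \<Rightarrow> 'i \<Rightarrow> 'a \<Rightarrow> 's) \<Rightarrow> nat \<Rightarrow> 'a measure" where
  "gen_filt M x0 S \<xi> k = sigma (space M)
     ({x0 -` A \<inter> space M | A. A \<in> sets borel} \<union>
      {\<xi> j i -` B \<inter> space M | j i B. j < k \<and> B \<in> sets S})"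

end

theory Submission imports Defs begin

lemma bp_nth[simp]: "blockproj blk i v $ c = (if blk c = i then v $ c else 0)"
  by (simp add: blockproj_def)

lemma bp_diff: "blockproj blk i (u - v) = blockproj blk i u - blockproj blk i v"
  by (simp add: vec_eq_iff)
lemma bp_add: "blockproj blk i (u + v) = blockproj blk i u + blockproj blk i v"
  by (simp add: vec_eq_iff)
lemma bp_scale: "blockproj blk i (a *\<^sub>R v) = a *\<^sub>R blockproj blk i v"
  by (simp add: vec_eq_iff)
lemma bp_idem[simp]: "blockproj blk i (blockproj blk i v) = blockproj blk i v"
  by (simp add: vec_eq_iff)
lemma bp_other: "i \<noteq> j \<Longrightarrow> blockproj blk i (blockproj blk j v) = 0"
  by (simp add: vec_eq_iff)

lemma bp_linear: "bounded_linear (blockproj blk i)"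
proof -
  have "linear (blockproj blk i)"
    by (rule linearI) (simp_all add: bp_add bp_scale)
  then show ?thesis by (simp add: linear_conv_bounded_linear)
qed

lemma bp_cont: "continuous_on S (blockproj blk i)"
  by (rule linear_continuous_on[OF bp_linear])

lemma bp_sum_vec: fixes blk :: "'c::finite \<Rightarrow> 'i::finite"
  shows "(\<Sum>i\<in>UNIV. blockproj blk i v) = v"
proof -
  have "(\<Sum>i\<in>(UNIV::'i::finite set). blockproj blk i v) $ c = v $ c" for c
    by (simp add: sum_component if_distrib cong: if_cong)
  then show ?thesis by (simp add: vec_eq_iff)
qed

lemma bp_inner_sum: "(\<Sum>i\<in>(UNIV::'i::finite set). blockproj blk i u \<bullet> blockproj blk i v) = (u :: real^'c::finite) \<bullet> v"
proof -
  have "(\<Sum>i\<in>(UNIV::'i set). blockproj blk i u \<bullet> blockproj blk i v)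
      = (\<Sum>i\<in>(UNIV::'i set). \<Sum>c\<in>UNIV. if blk c = i then u$c * v$c else 0)"
    by (simp add: inner_vec_def if_distrib cong: if_cong)
  also have "\<dots> = (\<Sum>c\<in>UNIV. \<Sum>i\<in>(UNIV::'i set). if blk c = i then u$c * v$c else 0)"
    by (rule sum.swap)
  also have "\<dots> = u \<bullet> v" by (simp add: inner_vec_def)
  finally show ?thesis .
qed

lemma bp_norm_sum: "(\<Sum>i\<in>(UNIV::'i::finite set). (norm (blockproj blk i u))\<^sup>2) = (norm (u :: real^'c::finite))\<^sup>2"
  using bp_inner_sum[of blk u u] by (simp add: power2_norm_eq_inner)

lemma abs_inner_le: "0 < L \<Longrightarrow> \<bar>a \<bullet> b\<bar> \<le> (L * (norm a)\<^sup>2 + (norm b)\<^sup>2 / L) / 2"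
  for a b :: "'a::real_inner"
proof -
  assume L: "0 < L"
  have 1: "0 \<le> (norm (L *\<^sub>R a - b))\<^sup>2" by simp
  have 2: "0 \<le> (norm (L *\<^sub>R a + b))\<^sup>2" by simp
  have e1: "(norm (L *\<^sub>R a - b))\<^sup>2 = L^2 * (norm a)\<^sup>2 - 2 * L * (a \<bullet> b) + (norm b)\<^sup>2"
    unfolding power2_norm_eq_inner by (simp add: inner_diff_left inner_diff_right inner_commute algebra_simps power2_eq_square)
  have e2: "(norm (L *\<^sub>R a + b))\<^sup>2 = L^2 * (norm a)\<^sup>2 + 2 * L * (a \<bullet> b) + (norm b)\<^sup>2"
    unfolding power2_norm_eq_inner by (simp add: inner_add_left inner_add_right inner_commute algebra_simps power2_eq_square)
  have "2 * L * \<bar>a \<bullet> b\<bar> \<le> L^2 * (norm a)\<^sup>2 + (norm b)\<^sup>2"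
    using 1 2 e1 e2 by (cases "a \<bullet> b \<ge> 0") (auto simp: abs_if)
  then have "L * (2 * \<bar>a \<bullet> b\<bar>) \<le> L * (L * (norm a)\<^sup>2 + (norm b)\<^sup>2 / L)"
    using L by (simp add: algebra_simps power2_eq_square)
  then have "2 * \<bar>a \<bullet> b\<bar> \<le> L * (norm a)\<^sup>2 + (norm b)\<^sup>2 / L"
    using L by simp
  then show ?thesis by simp
qed


lemma bp_cont'[continuous_intros]: "continuous_on S f \<Longrightarrow> continuous_on S (\<lambda>x. blockproj blk i (f x))"
  by (rule continuous_on_compose2[OF bp_cont[of UNIV]]) auto

lemma bp_sum_blocks:
  fixes blk :: "'c::finite \<Rightarrow> 'i::finite"
  assumes "\<And>i. w i = blockproj blk i (v i)"
  shows "blockproj blk j (\<Sum>i\<in>UNIV. w i) = w j"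
proof -
  have "(blockproj blk j (\<Sum>i\<in>UNIV. w i)) $ c = w j $ c" for c
  proof -
    have "(\<Sum>i\<in>UNIV. w i) $ c = (\<Sum>i\<in>UNIV. if blk c = i then v i $ c else 0)"
      by (simp add: sum_component assms)
    also have "\<dots> = v (blk c) $ c" by (simp add: if_distrib cong: if_cong)
    finally show ?thesis by (simp add: assms)
  qed
  then show ?thesis by (simp add: vec_eq_iff)
qed

lemma bp_norm_blocks:
  fixes blk :: "'c::finite \<Rightarrow> 'i::finite"
  assumes "\<And>i. w i = blockproj blk i (v i)"
  shows "(norm (\<Sum>i\<in>UNIV. w i))\<^sup>2 = (\<Sum>i\<in>UNIV. (norm (w i))\<^sup>2)"
  using bp_norm_sum[of blk "\<Sum>i\<in>UNIV. w i"] bp_sum_blocks[OF assms] by simp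

lemma bp_comp_le:
  fixes blk :: "'c::finite \<Rightarrow> 'i::finite"
  assumes "\<And>i. w i = blockproj blk i (v i)"
  shows "\<bar>w j $ c\<bar> \<le> norm (\<Sum>i\<in>UNIV. w i)"
proof -
  have "w j $ c = blockproj blk j (\<Sum>i\<in>UNIV. w i) $ c" using bp_sum_blocks[OF assms] by simp
  also have "\<bar>\<dots>\<bar> \<le> \<bar>(\<Sum>i\<in>UNIV. w i) $ c\<bar>" by simp
  also have "\<dots> \<le> norm (\<Sum>i\<in>UNIV. w i)" by (rule component_le_norm_cart)
  finally show ?thesis .
qed

lemma bp_norm_le:
  fixes blk :: "'c::finite \<Rightarrow> 'i::finite"
  shows "norm (blockproj blk i u) \<le> norm u"
proof -
  have "(norm (blockproj blk i u))\<^sup>2 \<le> (\<Sum>j\<in>(UNIV::'i set). (norm (blockproj blk j u))\<^sup>2)"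
    by (rule member_le_sum) auto
  then have "(norm (blockproj blk i u))\<^sup>2 \<le> (norm u)\<^sup>2" by (simp add: bp_norm_sum)
  then show ?thesis by (rule power2_le_imp_le) simp
qed

lemma norm_diff_sq_le: "(norm (a - b))\<^sup>2 \<le> 2 * (norm a)\<^sup>2 + 2 * (norm (b::'a::real_normed_vector))\<^sup>2"
proof -
  have "norm (a - b) \<le> norm a + norm b" by (rule norm_triangle_ineq4)
  then have "(norm (a - b))\<^sup>2 \<le> (norm a + norm b)\<^sup>2" by (simp add: power_mono)
  also have "\<dots> \<le> 2 * (norm a)\<^sup>2 + 2 * (norm b)\<^sup>2"
    using sum_squares_ge_zero[of "norm a - norm b" 0] by (simp add: power2_eq_square algebra_simps)
  finally show ?thesis .
qed

lemma norm_diff_sq_eq: "(norm (a - b))\<^sup>2 = (norm a)\<^sup>2 - 2 * (a \<bullet> b) + (norm (b::'a::real_inner))\<^sup>2"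
  unfolding power2_norm_eq_inner by (simp add: inner_diff_left inner_diff_right inner_commute)

lemma meas_cont_on:
  assumes "continuous_on X \<phi>" "f \<in> borel_measurable N" "\<And>\<omega>. \<omega> \<in> space N \<Longrightarrow> f \<omega> \<in> X"
  shows "(\<lambda>\<omega>. \<phi> (f \<omega>)) \<in> borel_measurable N"
proof -
  have "f \<in> measurable N (restrict_space borel X)"
    by (rule measurable_restrict_space2) (use assms in auto)
  from measurable_compose[OF this borel_measurable_continuous_on_restrict[OF assms(1)]]
  show ?thesis .
qed

lemma bp_block_space: "v \<in> block_space blk i \<Longrightarrow> blockproj blk i v = v"
  by (auto simp: block_space_def vec_eq_iff)

lemma bp_block_space_other: "v \<in> block_space blk i \<Longrightarrow> j \<noteq> i \<Longrightarrow> blockproj blk j v = 0"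
  by (auto simp: block_space_def vec_eq_iff)

lemma lin_aux: "(s::real) = p - 2*q + r \<Longrightarrow> p = n \<Longrightarrow> r \<le> R \<Longrightarrow> Q \<le> q \<Longrightarrow> s \<le> n - 2*Q + R"
  by linarith

lemma prod_le_sq:
  fixes a b :: real assumes "0 \<le> a" "0 \<le> b" shows "a * b \<le> a\<^sup>2 + b\<^sup>2"
proof -
  have "0 \<le> (a - b)\<^sup>2" by simp
  moreover have "(a - b)\<^sup>2 = a\<^sup>2 - 2 * (a * b) + b\<^sup>2" by (simp add: power2_eq_square algebra_simps)
  moreover have "0 \<le> a * b" using assms by simp
  ultimately show ?thesis by linarith
qed

lemma le_norm_of_le: "(y::real) \<le> z \<Longrightarrow> 0 \<le> y \<Longrightarrow> norm y \<le> norm z"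
  by simp

lemma bp_inner_left: "blockproj blk i v \<bullet> u = blockproj blk i v \<bullet> blockproj blk i u"
  unfolding inner_vec_def by (rule sum.cong) auto


theorem lemma3:
  fixes M :: "'a measure" and S :: "'s measure"
    and blk :: "'c::finite \<Rightarrow> 'i::finite"
    and Xb :: "'i \<Rightarrow> (real^'c) set"
    and F :: "real^'c \<Rightarrow> real^'c"
    and \<Phi> :: "'i \<Rightarrow> real^'c \<Rightarrow> 's \<Rightarrow> real^'c"
    and \<zeta> :: "'i \<Rightarrow> 'a \<Rightarrow> 's"
    and \<xi> :: "nat \<Rightarrow> 'i \<Rightarrow> 'a \<Rightarrow> 's"
    and x :: "nat \<Rightarrow> 'a \<Rightarrow> real^'c"
    and w :: "nat \<Rightarrow> 'i \<Rightarrow> 'a \<Rightarrow> real^'c"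
    and \<gamma> :: "nat \<Rightarrow> 'i \<Rightarrow> real"
    and \<delta> \<Gamma> :: "nat \<Rightarrow> real"
    and L \<eta> \<nu> :: real and xs :: "real^'c"
  defines "X \<equiv> cart_prod blk Xb"
      and "Fk \<equiv> gen_filt M (x 0) S \<xi>"
  assumes M: "prob_space M"
    and blk_surj: "surj blk"
    and Xb_sub: "\<And>i. Xb i \<subseteq> block_space blk i"
    and Xb_ne: "\<And>i. Xb i \<noteq> {}" and Xb_closed: "\<And>i. closed (Xb i)"
    and Xb_convex: "\<And>i. convex (Xb i)"
    and \<Phi>_meas: "\<And>i. (\<lambda>p. \<Phi> i (fst p) (snd p)) \<in> borel_measurable (borel \<Otimes>\<^sub>M S)"
    and \<zeta>_meas: "\<And>i. \<zeta> i \<in> M \<rightarrow>\<^sub>M S"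
    and F_exp_int: "\<And>i y. y \<in> X \<Longrightarrow> integrable M (\<lambda>\<omega>. \<Phi> i y (\<zeta> i \<omega>))"
    and F_exp: "\<And>i y. y \<in> X \<Longrightarrow>
                   blockproj blk i (F y) = blockproj blk i (\<integral>\<omega>. \<Phi> i y (\<zeta> i \<omega>) \<partial>M)"
    and L_pos: "L > 0"
    and F_lip: "\<And>y z. y \<in> X \<Longrightarrow> z \<in> X \<Longrightarrow> norm (F y - F z) \<le> L * norm (y - z)"
    and \<eta>_pos: "\<eta> > 0"
    and F_smon: "\<And>y z. y \<in> X \<Longrightarrow> z \<in> X \<Longrightarrow> (F y - F z) \<bullet> (y - z) \<ge> \<eta> * (norm (y - z))\<^sup>2"
    and xs_sol: "VI_sol X F xs"
    and \<xi>_meas: "\<And>k i. \<xi> k i \<in> M \<rightarrow>\<^sub>M S"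
    and x0_meas: "x 0 \<in> borel_measurable M"
    and x0_in: "\<And>\<omega>. \<omega> \<in> space M \<Longrightarrow> x 0 \<omega> \<in> X"
    and x0_sq: "integrable M (\<lambda>\<omega>. (norm (x 0 \<omega>))\<^sup>2)"
    and x0_indep: "prob_space.indep_set M
                     (sigma_sets (space M) {x 0 -` A \<inter> space M | A. A \<in> sets borel})
                     (sigma_sets (space M) {\<xi> k i -` B \<inter> space M | k i B. B \<in> sets S})"
    and \<gamma>_pos: "\<And>k i. \<gamma> k i > 0"
    and w_def: "\<And>k i \<omega>. w k i \<omega> = blockproj blk i (\<Phi> i (x k \<omega>) (\<xi> k i \<omega>)) - blockproj blk i (F (x k \<omega>))"
    and x_rec: "\<And>k i \<omega>. \<omega> \<in> space M \<Longrightarrow> blockproj blk i (x (Suc k) \<omega>) =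
                  closest_point (Xb i) (blockproj blk i (x k \<omega>) - \<gamma> k i *\<^sub>R (blockproj blk i (F (x k \<omega>)) + w k i \<omega>))"
    and w_int: "\<And>k i c. integrable M (\<lambda>\<omega>. w k i \<omega> $ c)"
    and w_mean0: "\<And>k i c. AE \<omega> in M. real_cond_exp M (Fk k) (\<lambda>\<omega>. w k i \<omega> $ c) \<omega> = 0"
    and \<nu>_pos: "\<nu> > 0"
    and w_sq_int: "\<And>k. integrable M (\<lambda>\<omega>. (norm (\<Sum>i\<in>UNIV. w k i \<omega>))\<^sup>2)"
    and w_var: "\<And>k. AE \<omega> in M. real_cond_exp M (Fk k) (\<lambda>\<omega>. (norm (\<Sum>i\<in>UNIV. w k i \<omega>))\<^sup>2) \<omega> \<le> \<nu>\<^sup>2"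
    and \<delta>_pos: "\<And>k. \<delta> k > 0" and \<Gamma>_pos: "\<And>k. \<Gamma> k > 0"
    and \<delta>_le: "\<And>k i. \<delta> k \<le> \<gamma> k i" and \<Gamma>_ge: "\<And>k i. \<gamma> k i \<le> \<Gamma> k"
  shows "(AE \<omega> in M. \<forall>k.
            real_cond_exp M (Fk k) (\<lambda>\<omega>. (norm (x (Suc k) \<omega> - xs))\<^sup>2) \<omega>
              \<le> (1 - 2 * (\<eta> + L) * \<delta> k + 2 * L * \<Gamma> k + L\<^sup>2 * (\<Gamma> k)\<^sup>2) * (norm (x k \<omega> - xs))\<^sup>2
                 + (\<Gamma> k)\<^sup>2 * \<nu>\<^sup>2)
       \<and> (\<forall>\<beta>::real. (\<forall>k. (\<Gamma> k - \<delta> k) / \<delta> k \<le> \<beta>) \<and> 0 \<le> \<beta> \<and> \<beta> < \<eta> / L \<longrightarrow>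
            (\<forall>k. (\<integral>\<omega>. (norm (x (Suc k) \<omega> - xs))\<^sup>2 \<partial>M)
                 \<le> (1 - 2 * (\<eta> - \<beta> * L) * \<delta> k + (1 + \<beta>)\<^sup>2 * L\<^sup>2 * (\<delta> k)\<^sup>2)
                      * (\<integral>\<omega>. (norm (x k \<omega> - xs))\<^sup>2 \<partial>M)
                   + (1 + \<beta>)\<^sup>2 * (\<delta> k)\<^sup>2 * \<nu>\<^sup>2))"
proof -
  interpret M: prob_space M by (rule M)
  define G where "G k = {x 0 -` A \<inter> space M | A. A \<in> sets borel} \<union>
      {\<xi> j i -` B \<inter> space M | j i B. j < k \<and> B \<in> sets S}" for k
  have Fk_eq: "Fk k = sigma (space M) (G k)" for k
    unfolding Fk_def gen_filt_def G_def ..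
  have G_sub: "G k \<subseteq> sets M" for k
    using x0_meas \<xi>_meas unfolding G_def by (auto simp: measurable_sets)
  have G_pow: "G k \<subseteq> Pow (space M)" for k
    using G_sub[of k] sets.sets_into_space by blast
  have sets_Fk: "sets (Fk k) = sigma_sets (space M) (G k)" for k
    by (simp add: Fk_eq sets_measure_of[OF G_pow])
  have space_Fk: "space (Fk k) = space M" for k
    by (simp add: Fk_eq space_measure_of_conv)
  have subalg: "subalgebra M (Fk k)" for k
    unfolding subalgebra_def using sets_Fk space_Fk sets.sigma_sets_subset[OF G_sub] by simp
  have sfs: "sigma_finite_subalgebra M (Fk k)" for k
    by (rule finite_measure_subalgebra_is_sigma_finite)
       (simp add: finite_measure_subalgebra_def finite_measure_subalgebra_axioms_def subalg M.finite_measure_axioms)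
  have nested: "subalgebra (Fk (Suc k)) (Fk k)" for k
  proof -
    have "G k \<subseteq> G (Suc k)"
    proof
      fix y assume "y \<in> G k"
      then consider A where "y = x 0 -` A \<inter> space M" "A \<in> sets borel"
        | j i B where "y = \<xi> j i -` B \<inter> space M" "j < k" "B \<in> sets S"
        unfolding G_def by blast
      then show "y \<in> G (Suc k)"
      proof cases
        case 1 then show ?thesis unfolding G_def by blast
      next
        case 2
        then have "j < Suc k" by simp
        with 2 show ?thesis unfolding G_def by blast
      qed
    qed
    then show ?thesis unfolding subalgebra_def sets_Fk space_Fk by (simp add: sigma_sets_mono')
  qed
  have x0F: "x 0 \<in> borel_measurable (Fk k)" for k
  proof (rule measurableI)
    fix A :: "(real^'c) set" assume "A \<in> sets borel"
    then have "x 0 -` A \<inter> space M \<in> G k" unfolding G_def by blast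
    then show "x 0 -` A \<inter> space (Fk k) \<in> sets (Fk k)" unfolding sets_Fk space_Fk by blast
  qed simp
  have \<xi>F: "\<xi> j i \<in> Fk k \<rightarrow>\<^sub>M S" if "j < k" for j i k
  proof (rule measurableI)
    fix B assume "B \<in> sets S"
    then have "\<xi> j i -` B \<inter> space M \<in> G k" unfolding G_def using that by blast
    then show "\<xi> j i -` B \<inter> space (Fk k) \<in> sets (Fk k)" unfolding sets_Fk space_Fk by blast
  next
    fix \<omega> assume "\<omega> \<in> space (Fk k)"
    then show "\<xi> j i \<omega> \<in> space S" using measurable_space[OF \<xi>_meas] space_Fk by auto
  qed
  have F_cont: "continuous_on X F"
  proof (rule lipschitz_on_continuous_on)
    show "L-lipschitz_on X F"
      by (rule lipschitz_onI) (use F_lip L_pos in \<open>auto simp: dist_norm\<close>)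
  qed
  have xs_X: "xs \<in> X" using xs_sol by (simp add: VI_sol_def)
  have X_iff: "y \<in> X \<longleftrightarrow> (\<forall>i. blockproj blk i y \<in> Xb i)" for y
    by (simp add: X_def cart_prod_def)
  have xs_fix: "blockproj blk i xs = closest_point (Xb i) (blockproj blk i xs - t *\<^sub>R blockproj blk i (F xs))"
    if t: "t > 0" for i t
  proof (rule closest_point_unique[OF Xb_convex Xb_closed])
    show "blockproj blk i xs \<in> Xb i" using xs_X X_iff by blast
    show "\<forall>z\<in>Xb i. dist (blockproj blk i xs - t *\<^sub>R blockproj blk i (F xs)) (blockproj blk i xs)
                   \<le> dist (blockproj blk i xs - t *\<^sub>R blockproj blk i (F xs)) z"
    proof
      fix z assume z: "z \<in> Xb i"
      have zb: "z \<in> block_space blk i" using z Xb_sub by blast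
      define x' where "x' = xs - blockproj blk i xs + z"
      have "x' \<in> X"
        unfolding X_iff
      proof
        fix j show "blockproj blk j x' \<in> Xb j"
        proof (cases "j = i")
          case True
          then show ?thesis using z bp_block_space[OF zb] by (simp add: x'_def bp_add bp_diff)
        next
          case False
          then have "blockproj blk j x' = blockproj blk j xs"
            using bp_block_space_other[OF zb False] bp_other[OF False]
            by (simp add: x'_def bp_add bp_diff)
          then show ?thesis using xs_X X_iff by simp
        qed
      qed
      then have "(x' - xs) \<bullet> F xs \<ge> 0" using xs_sol by (simp add: VI_sol_def)
      moreover have "x' - xs = z - blockproj blk i xs" by (simp add: x'_def)
      moreover have "z - blockproj blk i xs = blockproj blk i (z - blockproj blk i xs)"
        using bp_block_space[OF zb] by (simp add: bp_diff)
      ultimately have ip: "(z - blockproj blk i xs) \<bullet> blockproj blk i (F xs) \<ge> 0"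
      proof -
        assume A: "(x' - xs) \<bullet> F xs \<ge> 0" and B: "x' - xs = z - blockproj blk i xs"
          and C: "z - blockproj blk i xs = blockproj blk i (z - blockproj blk i xs)"
        have "(z - blockproj blk i xs) \<bullet> blockproj blk i (F xs)
            = blockproj blk i (z - blockproj blk i xs) \<bullet> blockproj blk i (F xs)"
          by (subst C) (rule refl)
        also have "\<dots> = blockproj blk i (z - blockproj blk i xs) \<bullet> F xs"
          by (rule bp_inner_left[symmetric])
        also have "\<dots> = (x' - xs) \<bullet> F xs"
          by (simp only: B C[symmetric])
        finally show ?thesis using A by simp
      qed
      define g where "g = blockproj blk i (F xs)"
      define p where "p = blockproj blk i xs"
      define a where "a = p - t *\<^sub>R g"
      have ip': "(z - p) \<bullet> g \<ge> 0" using ip unfolding g_def p_def .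
      have e1: "a - z = (p - z) - t *\<^sub>R g" unfolding a_def by (simp add: algebra_simps)
      have e2: "(norm ((p - z) - t *\<^sub>R g))\<^sup>2 = (norm (p - z))\<^sup>2 - 2 * ((p - z) \<bullet> (t *\<^sub>R g)) + (norm (t *\<^sub>R g))\<^sup>2"
        by (rule norm_diff_sq_eq)
      have e3: "(p - z) \<bullet> (t *\<^sub>R g) = - t * ((z - p) \<bullet> g)"
        by (simp add: inner_diff_left inner_diff_right algebra_simps)
      have e4: "a - p = - (t *\<^sub>R g)" unfolding a_def by simp
      have "(norm (a - p))\<^sup>2 \<le> (norm (a - z))\<^sup>2"
        unfolding e1 e2 e3 e4 norm_minus_cancel using ip' t
        by (simp add: mult_nonneg_nonneg)
      then have "norm (a - p) \<le> norm (a - z)"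
        by (rule power2_le_imp_le) simp
      then show "dist (blockproj blk i xs - t *\<^sub>R blockproj blk i (F xs)) (blockproj blk i xs)
                   \<le> dist (blockproj blk i xs - t *\<^sub>R blockproj blk i (F xs)) z"
        unfolding dist_norm a_def g_def p_def .
    qed
  qed
  have Fcomp: "(\<lambda>\<omega>. \<phi> (f \<omega>)) \<in> borel_measurable N"
    if "continuous_on X \<phi>" "f \<in> borel_measurable N" "\<And>\<omega>. \<omega> \<in> space N \<Longrightarrow> f \<omega> \<in> X"
    for \<phi> :: "real^'c \<Rightarrow> 'z::topological_space" and f and N :: "'a measure"
    using meas_cont_on[OF that] .
  have \<Phi>F: "(\<lambda>\<omega>. \<Phi> i (f \<omega>) (\<xi> k i \<omega>)) \<in> borel_measurable (Fk (Suc k))"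
    if "f \<in> borel_measurable (Fk (Suc k))" for f i k
  proof -
    have "(\<lambda>\<omega>. (f \<omega>, \<xi> k i \<omega>)) \<in> Fk (Suc k) \<rightarrow>\<^sub>M borel \<Otimes>\<^sub>M S"
      using that \<xi>F[of k "Suc k" i] by (intro measurable_Pair) auto
    from measurable_compose[OF this \<Phi>_meas[of i]] show ?thesis by simp
  qed
  have xrep: "x (Suc k) \<omega> = (\<Sum>i\<in>UNIV. closest_point (Xb i)
        (blockproj blk i (x k \<omega>) - \<gamma> k i *\<^sub>R blockproj blk i (\<Phi> i (x k \<omega>) (\<xi> k i \<omega>))))"
    if "\<omega> \<in> space M" for k \<omega>
  proof -
    have "x (Suc k) \<omega> = (\<Sum>i\<in>UNIV. blockproj blk i (x (Suc k) \<omega>))" by (simp add: bp_sum_vec)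
    also have "\<dots> = (\<Sum>i\<in>UNIV. closest_point (Xb i)
        (blockproj blk i (x k \<omega>) - \<gamma> k i *\<^sub>R blockproj blk i (\<Phi> i (x k \<omega>) (\<xi> k i \<omega>))))"
      by (rule sum.cong) (simp_all add: x_rec[OF that] w_def)
    finally show ?thesis .
  qed
  have xmeas: "x k \<in> borel_measurable (Fk k) \<and> (\<forall>\<omega>\<in>space M. x k \<omega> \<in> X)" for k
  proof (induction k)
    case 0
    then show ?case using x0F x0_in by auto
  next
    case (Suc k)
    have xk: "x k \<in> borel_measurable (Fk (Suc k))"
      using Suc measurable_from_subalg[OF nested] by blast
    have "(\<lambda>\<omega>. \<Sum>i\<in>UNIV. closest_point (Xb i)
        (blockproj blk i (x k \<omega>) - \<gamma> k i *\<^sub>R blockproj blk i (\<Phi> i (x k \<omega>) (\<xi> k i \<omega>))))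
        \<in> borel_measurable (Fk (Suc k))"
    proof (intro borel_measurable_sum)
      fix i
      have a: "(\<lambda>\<omega>. blockproj blk i (x k \<omega>)) \<in> borel_measurable (Fk (Suc k))"
        by (rule borel_measurable_continuous_on[OF bp_cont xk])
      have b: "(\<lambda>\<omega>. blockproj blk i (\<Phi> i (x k \<omega>) (\<xi> k i \<omega>))) \<in> borel_measurable (Fk (Suc k))"
        by (rule borel_measurable_continuous_on[OF bp_cont \<Phi>F[OF xk]])
      have "(\<lambda>\<omega>. blockproj blk i (x k \<omega>) - \<gamma> k i *\<^sub>R blockproj blk i (\<Phi> i (x k \<omega>) (\<xi> k i \<omega>)))
          \<in> borel_measurable (Fk (Suc k))"
        using a b by measurable
      then show "(\<lambda>\<omega>. closest_point (Xb i)
        (blockproj blk i (x k \<omega>) - \<gamma> k i *\<^sub>R blockproj blk i (\<Phi> i (x k \<omega>) (\<xi> k i \<omega>))))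
        \<in> borel_measurable (Fk (Suc k))"
        by (rule borel_measurable_continuous_on[OF continuous_on_closest_point[OF Xb_convex Xb_closed Xb_ne]])
    qed
    then have "x (Suc k) \<in> borel_measurable (Fk (Suc k))"
      by (subst measurable_cong[where g="\<lambda>\<omega>. \<Sum>i\<in>UNIV. closest_point (Xb i)
        (blockproj blk i (x k \<omega>) - \<gamma> k i *\<^sub>R blockproj blk i (\<Phi> i (x k \<omega>) (\<xi> k i \<omega>)))"])
         (simp_all add: xrep space_Fk)
    moreover have "x (Suc k) \<omega> \<in> X" if "\<omega> \<in> space M" for \<omega>
      unfolding X_iff using x_rec[OF that] closest_point_in_set[OF Xb_closed Xb_ne] by simp
    ultimately show ?case by blast
  qed
  have xF: "x k \<in> borel_measurable (Fk k)" for k using xmeas by blast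
  have xX: "\<omega> \<in> space M \<Longrightarrow> x k \<omega> \<in> X" for k \<omega> using xmeas by blast
  have xM: "x k \<in> borel_measurable M" for k using measurable_from_subalg[OF subalg xF] .
  define D where "D k \<omega> = x k \<omega> - xs" for k \<omega>
  define Fd where "Fd k \<omega> = F (x k \<omega>) - F xs" for k \<omega>
  define a where "a k i \<omega> = blockproj blk i (D k \<omega>) - \<gamma> k i *\<^sub>R blockproj blk i (Fd k \<omega>)" for k i \<omega>
  define W where "W k \<omega> = (norm (\<Sum>i\<in>UNIV. w k i \<omega>))\<^sup>2" for k \<omega>
  define c where "c k = 1 - 2 * (\<eta> + L) * \<delta> k + 2 * L * \<Gamma> k + L\<^sup>2 * (\<Gamma> k)\<^sup>2" for k
  have w_blk: "w k i \<omega> = blockproj blk i (\<Phi> i (x k \<omega>) (\<xi> k i \<omega>) - F (x k \<omega>))" for k i \<omega>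
    by (simp add: w_def bp_diff)
  have W_eq: "W k \<omega> = (\<Sum>i\<in>UNIV. (norm (w k i \<omega>))\<^sup>2)" for k \<omega>
    unfolding W_def by (rule bp_norm_blocks[where v="\<lambda>i. \<Phi> i (x k \<omega>) (\<xi> k i \<omega>) - F (x k \<omega>)", OF w_blk])
  have Gd: "\<delta> k \<le> \<Gamma> k" for k using \<delta>_le[of k undefined] \<Gamma>_ge[of k undefined] by linarith
  have key1: "(norm (x (Suc k) \<omega> - xs))\<^sup>2 \<le> (\<Sum>i\<in>UNIV. (norm (a k i \<omega> - \<gamma> k i *\<^sub>R w k i \<omega>))\<^sup>2)"
    if \<omega>: "\<omega> \<in> space M" for k \<omega>
  proof -
    have "(norm (x (Suc k) \<omega> - xs))\<^sup>2 = (\<Sum>i\<in>UNIV. (norm (blockproj blk i (x (Suc k) \<omega> - xs)))\<^sup>2)"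
      by (simp add: bp_norm_sum)
    also have "\<dots> \<le> (\<Sum>i\<in>UNIV. (norm (a k i \<omega> - \<gamma> k i *\<^sub>R w k i \<omega>))\<^sup>2)"
    proof (rule sum_mono)
      fix i
      define u where "u = blockproj blk i (x k \<omega>) - \<gamma> k i *\<^sub>R (blockproj blk i (F (x k \<omega>)) + w k i \<omega>)"
      define v where "v = blockproj blk i xs - \<gamma> k i *\<^sub>R blockproj blk i (F xs)"
      have "blockproj blk i (x (Suc k) \<omega> - xs) = closest_point (Xb i) u - closest_point (Xb i) v"
        unfolding u_def v_def bp_diff x_rec[OF \<omega>] xs_fix[OF \<gamma>_pos[of k i], symmetric] ..
      then have "norm (blockproj blk i (x (Suc k) \<omega> - xs)) \<le> norm (u - v)"
        using closest_point_lipschitz[OF Xb_convex Xb_closed Xb_ne, of i u v] by (simp add: dist_norm)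
      also have "u - v = a k i \<omega> - \<gamma> k i *\<^sub>R w k i \<omega>"
        unfolding u_def v_def a_def D_def Fd_def bp_diff by (simp add: algebra_simps)
      finally show "(norm (blockproj blk i (x (Suc k) \<omega> - xs)))\<^sup>2 \<le> (norm (a k i \<omega> - \<gamma> k i *\<^sub>R w k i \<omega>))\<^sup>2"
        by (simp add: power_mono)
    qed
    finally show ?thesis .
  qed
  have expand: "(norm (a k i \<omega> - \<gamma> k i *\<^sub>R w k i \<omega>))\<^sup>2
      = (norm (a k i \<omega>))\<^sup>2 - 2 * \<gamma> k i * (a k i \<omega> \<bullet> w k i \<omega>) + (\<gamma> k i)\<^sup>2 * (norm (w k i \<omega>))\<^sup>2" for k i \<omega>
    unfolding norm_diff_sq_eq by (simp add: power_mult_distrib)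
  have keyA: "(\<Sum>i\<in>UNIV. (norm (a k i \<omega>))\<^sup>2) \<le> c k * (norm (D k \<omega>))\<^sup>2"
    if \<omega>: "\<omega> \<in> space M" for k \<omega>
  proof -
    define u where "u i = blockproj blk i (D k \<omega>)" for i
    define f where "f i = blockproj blk i (Fd k \<omega>)" for i
    define nD where "nD = (norm (D k \<omega>))\<^sup>2"
    have ea: "(norm (a k i \<omega>))\<^sup>2 = (norm (u i))\<^sup>2 - 2 * (\<gamma> k i * (u i \<bullet> f i)) + (\<gamma> k i)\<^sup>2 * (norm (f i))\<^sup>2" for i
      unfolding a_def u_def[symmetric] f_def[symmetric] norm_diff_sq_eq by (simp add: power_mult_distrib)
    have sa: "(\<Sum>i\<in>UNIV. (norm (a k i \<omega>))\<^sup>2) = (\<Sum>i\<in>UNIV. (norm (u i))\<^sup>2) - 2 * (\<Sum>i\<in>UNIV. \<gamma> k i * (u i \<bullet> f i))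
        + (\<Sum>i\<in>UNIV. (\<gamma> k i)\<^sup>2 * (norm (f i))\<^sup>2)"
      unfolding ea by (simp add: sum.distrib sum_subtractf sum_distrib_left)
    have S1: "(\<Sum>i\<in>UNIV. (norm (u i))\<^sup>2) = nD" unfolding u_def nD_def by (rule bp_norm_sum)
    have nF: "(norm (Fd k \<omega>))\<^sup>2 \<le> L\<^sup>2 * nD"
    proof -
      have "norm (Fd k \<omega>) \<le> L * norm (D k \<omega>)" unfolding Fd_def D_def using F_lip[OF xX[OF \<omega>] xs_X] .
      then have "(norm (Fd k \<omega>))\<^sup>2 \<le> (L * norm (D k \<omega>))\<^sup>2" by (simp add: power_mono)
      then show ?thesis by (simp add: nD_def power_mult_distrib)
    qed
    have S3: "(\<Sum>i\<in>UNIV. (\<gamma> k i)\<^sup>2 * (norm (f i))\<^sup>2) \<le> (\<Gamma> k)\<^sup>2 * L\<^sup>2 * nD"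
    proof -
      have "(\<Sum>i\<in>UNIV. (\<gamma> k i)\<^sup>2 * (norm (f i))\<^sup>2) \<le> (\<Sum>i\<in>UNIV. (\<Gamma> k)\<^sup>2 * (norm (f i))\<^sup>2)"
        by (rule sum_mono, rule mult_right_mono, rule power_mono) (auto intro: less_imp_le[OF \<gamma>_pos] \<Gamma>_ge)
      also have "\<dots> = (\<Gamma> k)\<^sup>2 * (norm (Fd k \<omega>))\<^sup>2"
        unfolding f_def by (simp add: sum_distrib_left[symmetric] bp_norm_sum)
      also have "\<dots> \<le> (\<Gamma> k)\<^sup>2 * (L\<^sup>2 * nD)" using nF by (simp add: mult_left_mono)
      finally show ?thesis by simp
    qed
    have S2: "(\<Sum>i\<in>UNIV. \<gamma> k i * (u i \<bullet> f i)) \<ge> \<delta> k * (\<eta> * nD) - (\<Gamma> k - \<delta> k) * (L * nD)"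
    proof -
      have sm: "(\<Sum>i\<in>UNIV. u i \<bullet> f i) \<ge> \<eta> * nD"
      proof -
        have "(\<Sum>i\<in>UNIV. u i \<bullet> f i) = D k \<omega> \<bullet> Fd k \<omega>" unfolding u_def f_def by (rule bp_inner_sum)
        also have "\<dots> = (F (x k \<omega>) - F xs) \<bullet> (x k \<omega> - xs)" by (simp add: D_def Fd_def inner_commute)
        finally show ?thesis using F_smon[OF xX[OF \<omega>] xs_X] by (simp add: nD_def D_def)
      qed
      have ab: "(\<Sum>i\<in>UNIV. \<bar>u i \<bullet> f i\<bar>) \<le> L * nD"
      proof -
        have "(\<Sum>i\<in>UNIV. \<bar>u i \<bullet> f i\<bar>) \<le> (\<Sum>i\<in>UNIV. (L * (norm (u i))\<^sup>2 + (norm (f i))\<^sup>2 / L) / 2)"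
          by (rule sum_mono, rule abs_inner_le[OF L_pos])
        also have "\<dots> = (L * (\<Sum>i\<in>UNIV. (norm (u i))\<^sup>2) + (\<Sum>i\<in>UNIV. (norm (f i))\<^sup>2) / L) / 2"
          by (simp only: sum_divide_distrib[symmetric] sum.distrib sum_distrib_left[symmetric])
        also have "\<dots> = (L * nD + (norm (Fd k \<omega>))\<^sup>2 / L) / 2"
          using S1 unfolding f_def by (simp add: bp_norm_sum)
        also have "(norm (Fd k \<omega>))\<^sup>2 / L \<le> L * nD"
        proof -
          have eq: "L * nD * L = L\<^sup>2 * nD" by (simp add: power2_eq_square)
          show ?thesis unfolding pos_divide_le_eq[OF L_pos] using nF eq by linarith
        qed
        then have "(L * nD + (norm (Fd k \<omega>))\<^sup>2 / L) / 2 \<le> L * nD" by simp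
        finally show ?thesis .
      qed
      have "(\<Sum>i\<in>UNIV. (\<gamma> k i - \<delta> k) * (u i \<bullet> f i)) = (\<Sum>i\<in>UNIV. \<gamma> k i * (u i \<bullet> f i)) - \<delta> k * (\<Sum>i\<in>UNIV. u i \<bullet> f i)"
        by (simp add: left_diff_distrib sum_subtractf sum_distrib_left)
      moreover have "\<delta> k * (\<Sum>i\<in>UNIV. u i \<bullet> f i) \<ge> \<delta> k * (\<eta> * nD)"
        using sm \<delta>_pos[of k] by (simp add: mult_left_mono)
      moreover have "(\<Sum>i\<in>UNIV. (\<gamma> k i - \<delta> k) * (u i \<bullet> f i)) \<ge> - ((\<Gamma> k - \<delta> k) * (L * nD))"
      proof -
        have "(\<Sum>i\<in>UNIV. (\<gamma> k i - \<delta> k) * (u i \<bullet> f i)) \<ge> (\<Sum>i\<in>UNIV. - ((\<Gamma> k - \<delta> k) * \<bar>u i \<bullet> f i\<bar>))"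
        proof (rule sum_mono)
          fix i
          have "\<bar>(\<gamma> k i - \<delta> k) * (u i \<bullet> f i)\<bar> \<le> (\<Gamma> k - \<delta> k) * \<bar>u i \<bullet> f i\<bar>"
            unfolding abs_mult by (rule mult_right_mono) (use \<delta>_le[of k i] \<Gamma>_ge[of k i] in auto)
          then show "- ((\<Gamma> k - \<delta> k) * \<bar>u i \<bullet> f i\<bar>) \<le> (\<gamma> k i - \<delta> k) * (u i \<bullet> f i)" by linarith
        qed
        also have "(\<Sum>i\<in>UNIV. - ((\<Gamma> k - \<delta> k) * \<bar>u i \<bullet> f i\<bar>)) = - ((\<Gamma> k - \<delta> k) * (\<Sum>i\<in>UNIV. \<bar>u i \<bullet> f i\<bar>))"
          by (simp add: sum_distrib_left sum_negf)
        also have "\<dots> \<ge> - ((\<Gamma> k - \<delta> k) * (L * nD))"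
          using ab Gd[of k] by (simp add: mult_left_mono)
        finally show ?thesis by linarith
      qed
      ultimately show ?thesis by linarith
    qed
    have "(\<Sum>i\<in>UNIV. (norm (a k i \<omega>))\<^sup>2) \<le> nD - 2 * (\<delta> k * (\<eta> * nD) - (\<Gamma> k - \<delta> k) * (L * nD)) + (\<Gamma> k)\<^sup>2 * L\<^sup>2 * nD"
      by (rule lin_aux[OF sa S1 S3 S2])
    also have "\<dots> = c k * nD" by (simp add: c_def algebra_simps power2_eq_square)
    finally show ?thesis unfolding nD_def .
  qed
  have keyW: "(\<Sum>i\<in>UNIV. (\<gamma> k i)\<^sup>2 * (norm (w k i \<omega>))\<^sup>2) \<le> (\<Gamma> k)\<^sup>2 * W k \<omega>" for k \<omega>
  proof -
    have "(\<Sum>i\<in>UNIV. (\<gamma> k i)\<^sup>2 * (norm (w k i \<omega>))\<^sup>2) \<le> (\<Sum>i\<in>UNIV. (\<Gamma> k)\<^sup>2 * (norm (w k i \<omega>))\<^sup>2)"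
      by (rule sum_mono, rule mult_right_mono, rule power_mono) (auto intro: less_imp_le[OF \<gamma>_pos] \<Gamma>_ge)
    also have "\<dots> = (\<Gamma> k)\<^sup>2 * W k \<omega>" by (simp add: W_eq sum_distrib_left)
    finally show ?thesis .
  qed
  have W_fun: "W k = (\<lambda>\<omega>. (norm (\<Sum>i\<in>UNIV. w k i \<omega>))\<^sup>2)" for k
    by (rule ext) (simp add: W_def)
  have Wint: "integrable M (W k)" for k unfolding W_fun using w_sq_int .
  have WM: "W k \<in> borel_measurable M" for k using borel_measurable_integrable[OF Wint] .
  have DM: "(\<lambda>\<omega>. (norm (x k \<omega> - xs))\<^sup>2) \<in> borel_measurable (Fk k)" for k
  proof (rule meas_cont_on[where \<phi>="\<lambda>y. (norm (y - xs))\<^sup>2", OF _ xF])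
    show "continuous_on X (\<lambda>y. (norm (y - xs))\<^sup>2)" by (intro continuous_intros)
    show "\<And>\<omega>. \<omega> \<in> space (Fk k) \<Longrightarrow> x k \<omega> \<in> X" using xX space_Fk by auto
  qed
  have DMM: "(\<lambda>\<omega>. (norm (x k \<omega> - xs))\<^sup>2) \<in> borel_measurable M" for k
    using measurable_from_subalg[OF subalg DM] .
  have Dint: "integrable M (\<lambda>\<omega>. (norm (x k \<omega> - xs))\<^sup>2)" for k
  proof (induction k)
    case 0
    show ?case
    proof (rule Bochner_Integration.integrable_bound)
      show "integrable M (\<lambda>\<omega>. 2 * (norm (x 0 \<omega>))\<^sup>2 + 2 * (norm xs)\<^sup>2)"
        using x0_sq by simp
      show "(\<lambda>\<omega>. (norm (x 0 \<omega> - xs))\<^sup>2) \<in> borel_measurable M" by (rule DMM)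
      show "AE \<omega> in M. norm ((norm (x 0 \<omega> - xs))\<^sup>2) \<le> norm (2 * (norm (x 0 \<omega>))\<^sup>2 + 2 * (norm xs)\<^sup>2)"
        by (rule AE_I2, rule le_norm_of_le[OF norm_diff_sq_le]) simp
    qed
  next
    case (Suc k)
    show ?case
    proof (rule Bochner_Integration.integrable_bound)
      show "integrable M (\<lambda>\<omega>. 2 * (c k * (norm (x k \<omega> - xs))\<^sup>2) + 2 * ((\<Gamma> k)\<^sup>2 * W k \<omega>))"
        using Suc.IH Wint[of k] by simp
      show "(\<lambda>\<omega>. (norm (x (Suc k) \<omega> - xs))\<^sup>2) \<in> borel_measurable M" by (rule DMM)
      show "AE \<omega> in M. norm ((norm (x (Suc k) \<omega> - xs))\<^sup>2)
              \<le> norm (2 * (c k * (norm (x k \<omega> - xs))\<^sup>2) + 2 * ((\<Gamma> k)\<^sup>2 * W k \<omega>))"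
      proof (rule AE_I2)
        fix \<omega> assume \<omega>: "\<omega> \<in> space M"
        have "(norm (x (Suc k) \<omega> - xs))\<^sup>2 \<le> (\<Sum>i\<in>UNIV. (norm (a k i \<omega> - \<gamma> k i *\<^sub>R w k i \<omega>))\<^sup>2)"
          by (rule key1[OF \<omega>])
        also have "\<dots> \<le> (\<Sum>i\<in>UNIV. 2 * (norm (a k i \<omega>))\<^sup>2 + 2 * (norm (\<gamma> k i *\<^sub>R w k i \<omega>))\<^sup>2)"
          by (rule sum_mono, rule norm_diff_sq_le)
        also have "\<dots> = 2 * (\<Sum>i\<in>UNIV. (norm (a k i \<omega>))\<^sup>2) + 2 * (\<Sum>i\<in>UNIV. (\<gamma> k i)\<^sup>2 * (norm (w k i \<omega>))\<^sup>2)"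
          by (simp add: sum.distrib sum_distrib_left power_mult_distrib)
        also have "\<dots> \<le> 2 * (c k * (norm (x k \<omega> - xs))\<^sup>2) + 2 * ((\<Gamma> k)\<^sup>2 * W k \<omega>)"
          using keyA[OF \<omega>, of k, unfolded D_def] keyW[of k \<omega>] by linarith
        finally have le: "(norm (x (Suc k) \<omega> - xs))\<^sup>2 \<le> 2 * (c k * (norm (x k \<omega> - xs))\<^sup>2) + 2 * ((\<Gamma> k)\<^sup>2 * W k \<omega>)" .
        show "norm ((norm (x (Suc k) \<omega> - xs))\<^sup>2) \<le> norm (2 * (c k * (norm (x k \<omega> - xs))\<^sup>2) + 2 * ((\<Gamma> k)\<^sup>2 * W k \<omega>))"
          by (rule le_norm_of_le[OF le]) simp
      qed
    qed
  qed
  define gg where "gg k i c \<omega> = 2 * \<gamma> k i * (a k i \<omega> $ c)" for k i c \<omega>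
  have cross: "(\<Sum>i\<in>UNIV. 2 * \<gamma> k i * (a k i \<omega> \<bullet> w k i \<omega>)) = (\<Sum>i\<in>UNIV. \<Sum>c\<in>UNIV. gg k i c \<omega> * (w k i \<omega> $ c))" for k \<omega>
    unfolding gg_def inner_vec_def by (simp add: sum_distrib_left mult.assoc)
  have ptw: "(norm (x (Suc k) \<omega> - xs))\<^sup>2 \<le> c k * (norm (x k \<omega> - xs))\<^sup>2
      - (\<Sum>i\<in>UNIV. \<Sum>c\<in>UNIV. gg k i c \<omega> * (w k i \<omega> $ c)) + (\<Gamma> k)\<^sup>2 * W k \<omega>"
    if \<omega>: "\<omega> \<in> space M" for k \<omega>
  proof -
    have "(norm (x (Suc k) \<omega> - xs))\<^sup>2 \<le> (\<Sum>i\<in>UNIV. (norm (a k i \<omega> - \<gamma> k i *\<^sub>R w k i \<omega>))\<^sup>2)"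
      by (rule key1[OF \<omega>])
    also have "\<dots> = (\<Sum>i\<in>UNIV. (norm (a k i \<omega>))\<^sup>2 - 2 * \<gamma> k i * (a k i \<omega> \<bullet> w k i \<omega>) + (\<gamma> k i)\<^sup>2 * (norm (w k i \<omega>))\<^sup>2)"
      by (simp only: expand)
    also have "\<dots> = (\<Sum>i\<in>UNIV. (norm (a k i \<omega>))\<^sup>2) - (\<Sum>i\<in>UNIV. \<Sum>c\<in>UNIV. gg k i c \<omega> * (w k i \<omega> $ c))
        + (\<Sum>i\<in>UNIV. (\<gamma> k i)\<^sup>2 * (norm (w k i \<omega>))\<^sup>2)"
      by (simp only: sum.distrib sum_subtractf cross)
    also have "\<dots> \<le> c k * (norm (x k \<omega> - xs))\<^sup>2 - (\<Sum>i\<in>UNIV. \<Sum>c\<in>UNIV. gg k i c \<omega> * (w k i \<omega> $ c)) + (\<Gamma> k)\<^sup>2 * W k \<omega>"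
      using keyA[OF \<omega>, of k, unfolded D_def] keyW[of k \<omega>] by linarith
    finally show ?thesis .
  qed
  define K where "K k = 2 * \<Gamma> k * (1 + \<Gamma> k * L)" for k
  have K_nn: "0 \<le> K k" for k unfolding K_def using \<Gamma>_pos[of k] L_pos by simp
  have ggF: "gg k i c \<in> borel_measurable (Fk k)" for k i c
  proof -
    have "gg k i c = (\<lambda>\<omega>. (\<lambda>y. 2 * \<gamma> k i * ((blockproj blk i (y - xs) - \<gamma> k i *\<^sub>R blockproj blk i (F y - F xs)) $ c)) (x k \<omega>))"
      by (rule ext) (simp only: gg_def a_def D_def Fd_def)
    also have "\<dots> \<in> borel_measurable (Fk k)"
    proof (rule Fcomp[OF _ xF])
      show "continuous_on X (\<lambda>y. 2 * \<gamma> k i * ((blockproj blk i (y - xs) - \<gamma> k i *\<^sub>R blockproj blk i (F y - F xs)) $ c))"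
        by (intro continuous_intros F_cont)
      show "\<And>\<omega>. \<omega> \<in> space (Fk k) \<Longrightarrow> x k \<omega> \<in> X" using xX space_Fk by auto
    qed
    finally show ?thesis .
  qed
  have ggM: "gg k i c \<in> borel_measurable M" for k i c using measurable_from_subalg[OF subalg ggF] .
  have wcM: "(\<lambda>\<omega>. w k i \<omega> $ c) \<in> borel_measurable M" for k i c
    using borel_measurable_integrable[OF w_int] .
  have ggw_bd: "\<bar>gg k i c \<omega> * (w k i \<omega> $ c)\<bar> \<le> K k * ((norm (x k \<omega> - xs))\<^sup>2 + W k \<omega>)"
    if \<omega>: "\<omega> \<in> space M" for k i c \<omega>
  proof -
    define nD where "nD = norm (x k \<omega> - xs)"
    define nW where "nW = norm (\<Sum>i\<in>UNIV. w k i \<omega>)"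
    have n1: "norm (a k i \<omega>) \<le> (1 + \<Gamma> k * L) * nD"
    proof -
      have "norm (a k i \<omega>) \<le> norm (blockproj blk i (D k \<omega>)) + norm (\<gamma> k i *\<^sub>R blockproj blk i (Fd k \<omega>))"
        unfolding a_def by (rule norm_triangle_ineq4)
      also have "norm (blockproj blk i (D k \<omega>)) \<le> nD" unfolding nD_def D_def by (rule bp_norm_le)
      also have "norm (\<gamma> k i *\<^sub>R blockproj blk i (Fd k \<omega>)) = \<gamma> k i * norm (blockproj blk i (Fd k \<omega>))"
        using \<gamma>_pos[of k i] by simp
      also have "\<dots> \<le> \<Gamma> k * (L * nD)"
      proof (rule mult_mono)
        show "\<gamma> k i \<le> \<Gamma> k" by (rule \<Gamma>_ge)
        have "norm (blockproj blk i (Fd k \<omega>)) \<le> norm (Fd k \<omega>)" by (rule bp_norm_le)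
        also have "\<dots> \<le> L * nD" unfolding Fd_def nD_def using F_lip[OF xX[OF \<omega>] xs_X] .
        finally show "norm (blockproj blk i (Fd k \<omega>)) \<le> L * nD" .
      qed (use \<Gamma>_pos[of k] in auto)
      finally show ?thesis by (simp add: algebra_simps)
    qed
    have n2: "\<bar>gg k i c \<omega>\<bar> \<le> K k * nD"
    proof -
      have "\<bar>gg k i c \<omega>\<bar> = 2 * \<gamma> k i * \<bar>a k i \<omega> $ c\<bar>"
        unfolding gg_def using \<gamma>_pos[of k i] by (simp add: abs_mult)
      also have "\<dots> \<le> 2 * \<Gamma> k * ((1 + \<Gamma> k * L) * nD)"
      proof (rule mult_mono)
        show "2 * \<gamma> k i \<le> 2 * \<Gamma> k" using \<Gamma>_ge[of k i] by simp
        show "\<bar>a k i \<omega> $ c\<bar> \<le> (1 + \<Gamma> k * L) * nD"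
          using component_le_norm_cart[of "a k i \<omega>" c] n1 by linarith
      qed (use \<Gamma>_pos[of k] in auto)
      finally show ?thesis unfolding K_def by (simp add: mult.assoc)
    qed
    have n3: "\<bar>w k i \<omega> $ c\<bar> \<le> nW" unfolding nW_def
      by (rule bp_comp_le[where v="\<lambda>i. \<Phi> i (x k \<omega>) (\<xi> k i \<omega>) - F (x k \<omega>)", OF w_blk])
    have "\<bar>gg k i c \<omega> * (w k i \<omega> $ c)\<bar> = \<bar>gg k i c \<omega>\<bar> * \<bar>w k i \<omega> $ c\<bar>" by (rule abs_mult)
    also have "\<dots> \<le> (K k * nD) * nW"
      by (rule mult_mono[OF n2 n3]) (use K_nn nD_def in auto)
    also have "\<dots> = K k * (nD * nW)" by simp
    also have "\<dots> \<le> K k * (nD\<^sup>2 + nW\<^sup>2)"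
      by (rule mult_left_mono[OF prod_le_sq K_nn]) (simp_all add: nD_def nW_def)
    finally show ?thesis by (simp add: nD_def nW_def W_def)
  qed
  have Cint: "integrable M (\<lambda>\<omega>. gg k i c \<omega> * (w k i \<omega> $ c))" for k i c
  proof (rule Bochner_Integration.integrable_bound)
    show "integrable M (\<lambda>\<omega>. K k * ((norm (x k \<omega> - xs))\<^sup>2 + W k \<omega>))"
      using Dint[of k] Wint[of k] by simp
    show "(\<lambda>\<omega>. gg k i c \<omega> * (w k i \<omega> $ c)) \<in> borel_measurable M"
      by (rule borel_measurable_times[OF ggM wcM])
    show "AE \<omega> in M. norm (gg k i c \<omega> * (w k i \<omega> $ c)) \<le> norm (K k * ((norm (x k \<omega> - xs))\<^sup>2 + W k \<omega>))"
    proof (rule AE_I2)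
      fix \<omega> assume \<omega>: "\<omega> \<in> space M"
      have "0 \<le> K k * ((norm (x k \<omega> - xs))\<^sup>2 + W k \<omega>)" using K_nn[of k] by (simp add: W_def)
      then show "norm (gg k i c \<omega> * (w k i \<omega> $ c)) \<le> norm (K k * ((norm (x k \<omega> - xs))\<^sup>2 + W k \<omega>))"
        using ggw_bd[OF \<omega>, of k i c] by simp
    qed
  qed
  have partA: "AE \<omega> in M. real_cond_exp M (Fk k) (\<lambda>\<omega>. (norm (x (Suc k) \<omega> - xs))\<^sup>2) \<omega>
      \<le> c k * (norm (x k \<omega> - xs))\<^sup>2 + (\<Gamma> k)\<^sup>2 * \<nu>\<^sup>2" for k
  proof -
    define A where "A = (\<lambda>\<omega>. c k * (norm (x k \<omega> - xs))\<^sup>2)"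
    define S where "S = (\<lambda>\<omega>. \<Sum>i\<in>UNIV. \<Sum>c\<in>UNIV. gg k i c \<omega> * (w k i \<omega> $ c))"
    define B where "B = (\<lambda>\<omega>. (\<Gamma> k)\<^sup>2 * W k \<omega>)"
    have Aint: "integrable M A" unfolding A_def using Dint[of k] by simp
    have AF: "A \<in> borel_measurable (Fk k)" unfolding A_def
      by (rule borel_measurable_times[OF borel_measurable_const DM])
    have Siint: "integrable M (\<lambda>\<omega>. \<Sum>c\<in>UNIV. gg k i c \<omega> * (w k i \<omega> $ c))" for i
      by (intro Bochner_Integration.integrable_sum Cint)
    have Sint: "integrable M S" unfolding S_def by (intro Bochner_Integration.integrable_sum Siint)
    have Bint: "integrable M B" unfolding B_def using Wint[of k] by simp
    have ASint: "integrable M (\<lambda>\<omega>. A \<omega> - S \<omega>)" using Aint Sint by simp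
    have Tint: "integrable M (\<lambda>\<omega>. (A \<omega> - S \<omega>) + B \<omega>)" using ASint Bint by simp
    have le: "AE \<omega> in M. (norm (x (Suc k) \<omega> - xs))\<^sup>2 \<le> (A \<omega> - S \<omega>) + B \<omega>"
    proof (rule AE_I2)
      fix \<omega> assume "\<omega> \<in> space M"
      then show "(norm (x (Suc k) \<omega> - xs))\<^sup>2 \<le> (A \<omega> - S \<omega>) + B \<omega>"
        unfolding A_def S_def B_def by (rule ptw)
    qed
    have ce1: "AE \<omega> in M. real_cond_exp M (Fk k) (\<lambda>\<omega>. (norm (x (Suc k) \<omega> - xs))\<^sup>2) \<omega>
        \<le> real_cond_exp M (Fk k) (\<lambda>\<omega>. (A \<omega> - S \<omega>) + B \<omega>) \<omega>"
      using sigma_finite_subalgebra.real_cond_exp_mono[OF sfs le Dint[of "Suc k"] Tint] .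
    have ce2: "AE \<omega> in M. real_cond_exp M (Fk k) (\<lambda>\<omega>. (A \<omega> - S \<omega>) + B \<omega>) \<omega>
        = real_cond_exp M (Fk k) (\<lambda>\<omega>. A \<omega> - S \<omega>) \<omega> + real_cond_exp M (Fk k) B \<omega>"
      using sigma_finite_subalgebra.real_cond_exp_add[OF sfs ASint Bint] .
    have ce3: "AE \<omega> in M. real_cond_exp M (Fk k) (\<lambda>\<omega>. A \<omega> - S \<omega>) \<omega>
        = real_cond_exp M (Fk k) A \<omega> - real_cond_exp M (Fk k) S \<omega>"
      using sigma_finite_subalgebra.real_cond_exp_diff[OF sfs Aint Sint] .
    have ce4: "AE \<omega> in M. real_cond_exp M (Fk k) A \<omega> = A \<omega>"
      using sigma_finite_subalgebra.real_cond_exp_F_meas[OF sfs Aint AF] .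
    have ce5: "AE \<omega> in M. real_cond_exp M (Fk k) S \<omega>
        = (\<Sum>i\<in>UNIV. real_cond_exp M (Fk k) (\<lambda>\<omega>. \<Sum>c\<in>UNIV. gg k i c \<omega> * (w k i \<omega> $ c)) \<omega>)"
      unfolding S_def
      by (rule sigma_finite_subalgebra.real_cond_exp_sum[OF sfs,
            where f="\<lambda>i \<omega>. \<Sum>c\<in>UNIV. gg k i c \<omega> * (w k i \<omega> $ c)"]) (rule Siint)
    have ce6: "AE \<omega> in M. \<forall>i\<in>UNIV. real_cond_exp M (Fk k) (\<lambda>\<omega>. \<Sum>c\<in>UNIV. gg k i c \<omega> * (w k i \<omega> $ c)) \<omega>
        = (\<Sum>c\<in>UNIV. real_cond_exp M (Fk k) (\<lambda>\<omega>. gg k i c \<omega> * (w k i \<omega> $ c)) \<omega>)"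
    proof (rule AE_finite_allI)
      fix i :: 'i
      show "AE \<omega> in M. real_cond_exp M (Fk k) (\<lambda>\<omega>. \<Sum>c\<in>UNIV. gg k i c \<omega> * (w k i \<omega> $ c)) \<omega>
        = (\<Sum>c\<in>UNIV. real_cond_exp M (Fk k) (\<lambda>\<omega>. gg k i c \<omega> * (w k i \<omega> $ c)) \<omega>)"
        by (rule sigma_finite_subalgebra.real_cond_exp_sum[OF sfs,
            where f="\<lambda>c \<omega>. gg k i c \<omega> * (w k i \<omega> $ c)"]) (rule Cint)
    qed simp
    have ce7: "AE \<omega> in M. \<forall>i\<in>UNIV. \<forall>c\<in>UNIV. real_cond_exp M (Fk k) (\<lambda>\<omega>. gg k i c \<omega> * (w k i \<omega> $ c)) \<omega>
        = gg k i c \<omega> * real_cond_exp M (Fk k) (\<lambda>\<omega>. w k i \<omega> $ c) \<omega>"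
    proof (rule AE_finite_allI)
      fix i :: 'i
      show "AE \<omega> in M. \<forall>c\<in>UNIV. real_cond_exp M (Fk k) (\<lambda>\<omega>. gg k i c \<omega> * (w k i \<omega> $ c)) \<omega>
        = gg k i c \<omega> * real_cond_exp M (Fk k) (\<lambda>\<omega>. w k i \<omega> $ c) \<omega>"
      proof (rule AE_finite_allI)
        fix c :: 'c
        show "AE \<omega> in M. real_cond_exp M (Fk k) (\<lambda>\<omega>. gg k i c \<omega> * (w k i \<omega> $ c)) \<omega>
          = gg k i c \<omega> * real_cond_exp M (Fk k) (\<lambda>\<omega>. w k i \<omega> $ c) \<omega>"
          using sigma_finite_subalgebra.real_cond_exp_mult[OF sfs ggF wcM Cint] .
      qed simp
    qed simp
    have ce8: "AE \<omega> in M. \<forall>i\<in>UNIV. \<forall>c\<in>UNIV. real_cond_exp M (Fk k) (\<lambda>\<omega>. w k i \<omega> $ c) \<omega> = 0"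
    proof (rule AE_finite_allI)
      fix i :: 'i
      show "AE \<omega> in M. \<forall>c\<in>UNIV. real_cond_exp M (Fk k) (\<lambda>\<omega>. w k i \<omega> $ c) \<omega> = 0"
        by (rule AE_finite_allI) (simp_all add: w_mean0)
    qed simp
    have ce9: "AE \<omega> in M. real_cond_exp M (Fk k) B \<omega> = (\<Gamma> k)\<^sup>2 * real_cond_exp M (Fk k) (W k) \<omega>"
      unfolding B_def using sigma_finite_subalgebra.real_cond_exp_cmult[OF sfs Wint[of k], where c="(\<Gamma> k)\<^sup>2"] .
    have ce10: "AE \<omega> in M. real_cond_exp M (Fk k) (W k) \<omega> \<le> \<nu>\<^sup>2"
      unfolding W_fun using w_var[of k] .
    show ?thesis
      using ce1 ce2 ce3 ce4 ce5 ce6 ce7 ce8 ce9 ce10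
    proof eventually_elim
      case (elim \<omega>)
      have S0: "real_cond_exp M (Fk k) S \<omega> = 0" using elim(5,6,7,8) by simp
      have "(\<Gamma> k)\<^sup>2 * real_cond_exp M (Fk k) (W k) \<omega> \<le> (\<Gamma> k)\<^sup>2 * \<nu>\<^sup>2"
        using elim(10) by (rule mult_left_mono) simp
      then show ?case using elim(1,2,3,4,9) S0 unfolding A_def by simp
    qed
  qed
  have part_a: "AE \<omega> in M. \<forall>k.
            real_cond_exp M (Fk k) (\<lambda>\<omega>. (norm (x (Suc k) \<omega> - xs))\<^sup>2) \<omega>
              \<le> (1 - 2 * (\<eta> + L) * \<delta> k + 2 * L * \<Gamma> k + L\<^sup>2 * (\<Gamma> k)\<^sup>2) * (norm (x k \<omega> - xs))\<^sup>2
                 + (\<Gamma> k)\<^sup>2 * \<nu>\<^sup>2"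
    unfolding AE_all_countable using partA unfolding c_def by blast
  have part_b: "(\<integral>\<omega>. (norm (x (Suc k) \<omega> - xs))\<^sup>2 \<partial>M)
                 \<le> (1 - 2 * (\<eta> - \<beta> * L) * \<delta> k + (1 + \<beta>)\<^sup>2 * L\<^sup>2 * (\<delta> k)\<^sup>2)
                      * (\<integral>\<omega>. (norm (x k \<omega> - xs))\<^sup>2 \<partial>M)
                   + (1 + \<beta>)\<^sup>2 * (\<delta> k)\<^sup>2 * \<nu>\<^sup>2"
    if hb: "\<forall>k. (\<Gamma> k - \<delta> k) / \<delta> k \<le> \<beta>" "0 \<le> \<beta>" for \<beta> k
  proof -
    have dk: "0 < \<delta> k" by (rule \<delta>_pos)
    have "\<Gamma> k - \<delta> k \<le> \<beta> * \<delta> k" using hb(1)[rule_format, of k] unfolding pos_divide_le_eq[OF dk] .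
    then have Gb: "\<Gamma> k \<le> (1 + \<beta>) * \<delta> k" by (simp add: algebra_simps)
    have G2: "(\<Gamma> k)\<^sup>2 \<le> ((1 + \<beta>) * \<delta> k)\<^sup>2"
      by (rule power_mono[OF Gb]) (use \<Gamma>_pos[of k] in simp)
    define I0 where "I0 = (\<integral>\<omega>. (norm (x k \<omega> - xs))\<^sup>2 \<partial>M)"
    have I0nn: "0 \<le> I0" unfolding I0_def by (rule integral_nonneg_AE) simp
    have "(\<integral>\<omega>. (norm (x (Suc k) \<omega> - xs))\<^sup>2 \<partial>M)
        = (\<integral>\<omega>. real_cond_exp M (Fk k) (\<lambda>\<omega>. (norm (x (Suc k) \<omega> - xs))\<^sup>2) \<omega> \<partial>M)"
      using sigma_finite_subalgebra.real_cond_exp_int(2)[OF sfs Dint[of "Suc k"]] by simp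
    also have "\<dots> \<le> (\<integral>\<omega>. c k * (norm (x k \<omega> - xs))\<^sup>2 + (\<Gamma> k)\<^sup>2 * \<nu>\<^sup>2 \<partial>M)"
    proof (rule integral_mono_AE)
      show "integrable M (real_cond_exp M (Fk k) (\<lambda>\<omega>. (norm (x (Suc k) \<omega> - xs))\<^sup>2))"
        using sigma_finite_subalgebra.real_cond_exp_int(1)[OF sfs Dint[of "Suc k"]] .
      show "integrable M (\<lambda>\<omega>. c k * (norm (x k \<omega> - xs))\<^sup>2 + (\<Gamma> k)\<^sup>2 * \<nu>\<^sup>2)"
        using Dint[of k] by simp
      show "AE \<omega> in M. real_cond_exp M (Fk k) (\<lambda>\<omega>. (norm (x (Suc k) \<omega> - xs))\<^sup>2) \<omega>
          \<le> c k * (norm (x k \<omega> - xs))\<^sup>2 + (\<Gamma> k)\<^sup>2 * \<nu>\<^sup>2" by (rule partA)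
    qed
    also have "\<dots> = c k * I0 + (\<Gamma> k)\<^sup>2 * \<nu>\<^sup>2"
      unfolding I0_def using Dint[of k] by (simp add: M.prob_space)
    also have "\<dots> \<le> (1 - 2 * (\<eta> - \<beta> * L) * \<delta> k + (1 + \<beta>)\<^sup>2 * L\<^sup>2 * (\<delta> k)\<^sup>2) * I0
                   + (1 + \<beta>)\<^sup>2 * (\<delta> k)\<^sup>2 * \<nu>\<^sup>2"
    proof (rule add_mono)
      have "c k \<le> 1 - 2 * (\<eta> - \<beta> * L) * \<delta> k + (1 + \<beta>)\<^sup>2 * L\<^sup>2 * (\<delta> k)\<^sup>2"
      proof -
        have "2 * L * \<Gamma> k \<le> 2 * L * ((1 + \<beta>) * \<delta> k)" using Gb L_pos by simp
        moreover have "L\<^sup>2 * (\<Gamma> k)\<^sup>2 \<le> L\<^sup>2 * ((1 + \<beta>) * \<delta> k)\<^sup>2" using G2 by (simp add: mult_left_mono)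
        ultimately have "c k \<le> 1 - 2 * (\<eta> + L) * \<delta> k + 2 * L * ((1 + \<beta>) * \<delta> k) + L\<^sup>2 * ((1 + \<beta>) * \<delta> k)\<^sup>2"
          unfolding c_def by linarith
        also have "\<dots> = 1 - 2 * (\<eta> - \<beta> * L) * \<delta> k + (1 + \<beta>)\<^sup>2 * L\<^sup>2 * (\<delta> k)\<^sup>2"
          by (simp add: power2_eq_square algebra_simps)
        finally show ?thesis .
      qed
      then show "c k * I0 \<le> (1 - 2 * (\<eta> - \<beta> * L) * \<delta> k + (1 + \<beta>)\<^sup>2 * L\<^sup>2 * (\<delta> k)\<^sup>2) * I0"
        using I0nn by (rule mult_right_mono)
      have "(\<Gamma> k)\<^sup>2 * \<nu>\<^sup>2 \<le> ((1 + \<beta>) * \<delta> k)\<^sup>2 * \<nu>\<^sup>2" using G2 by (rule mult_right_mono) simp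
      then show "(\<Gamma> k)\<^sup>2 * \<nu>\<^sup>2 \<le> (1 + \<beta>)\<^sup>2 * (\<delta> k)\<^sup>2 * \<nu>\<^sup>2" by (simp add: power_mult_distrib)
    qed
    finally show ?thesis unfolding I0_def .
  qed
  show ?thesis using part_a part_b by blast
qed
end
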